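(* Let $n\ge 2$ be an integer and $t>1$ a real number, and let $O^t_n$ be the set of $n$ line segments in the plane defined below. Then every imprecise $t$-spanner for $O^t_n$ is the complete graph: for any two distinct segments of $O^t_n$ there is an edge between them. In particular, every imprecise $t$-spanner for $O^t_n$ has $\binom{n}{2}=\Omega(n^2)$ edges.
   Context: Construction of $O^t_n$: let $\theta=2\pi/n$ and for $0\le i<n$ let $\ell_i$ be the ray from the origin obtained by rotating the positive $x$-axis by angle $i\theta$. Let $D_1,D_2$ be the disks centered at the origin with radii $0.4$ and $(t+1)/2$. Let $p_i$ and $q_i$ be the intersection points of $\ell_i$ with the boundaries of $D_1$ and $D_2$ respectively. Then $O^t_n=\{\overline{p_iq_i} : 0\le i<n\}$, a set of pairwise disjoint segments. An imprecise point set is a set $R=\{R_1,\dots,R_n\}$ of regions in $\mathbb{R}^d$; a precise instance of $R$ is a set $S=\{x_1,\dots,x_n\}$ with $x_i\in R_i$ for all $i$. An imprecise graph $G=(R,E)$ has as edges unordered pairs of regions; for a precise instance $S$, $G_S=(S,E_S)$ with $E_S=\{\{x_i,x_j\}:\{R_i,R_j\}\in E\}$, edges weighted by Euclidean length. A geometric graph $H$ on a point set is a $t$-spanner if for all distinct vertices $u,v$ the shortest-path distance $d_H(u,v)$ satisfies $d_H(u,v)\le t\,|uv|$. $G$ is an imprecise $t$-spanner for $R$ if $G_S$ is a $t$-spanner for every precise instance $S$ of $R$. *)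

theory Defs
  imports "HOL-Analysis.Analysis" "HOL-Library.Extended_Real"
begin

text \<open>The plane R^2 is modelled by the complex numbers (Euclidean distance = dist).\<close>

definition O_seg :: "real \<Rightarrow> nat \<Rightarrow> nat \<Rightarrow> complex set" where
  "O_seg t n i = closed_segment (complex_of_real 0.4 * cis (real i * (2 * pi / real n)))
                                (complex_of_real ((t + 1) / 2) * cis (real i * (2 * pi / real n)))"

definition precise_instance :: "nat \<Rightarrow> (nat \<Rightarrow> complex set) \<Rightarrow> (nat \<Rightarrow> complex) \<Rightarrow> bool" where
  "precise_instance n R x \<longleftrightarrow> (\<forall>i<n. x i \<in> R i)"

definition imprecise_graph :: "nat \<Rightarrow> nat set set \<Rightarrow> bool" where
  "imprecise_graph n E \<longleftrightarrow> E \<subseteq> {{i, j} | i j. i < n \<and> j < n \<and> i \<noteq> j}"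

definition walk :: "nat \<Rightarrow> nat set set \<Rightarrow> nat list \<Rightarrow> nat \<Rightarrow> nat \<Rightarrow> bool" where
  "walk n E ws i j \<longleftrightarrow> ws \<noteq> [] \<and> hd ws = i \<and> last ws = j \<and> (\<forall>k\<in>set ws. k < n) \<and>
     (\<forall>(a, b) \<in> set (zip ws (tl ws)). {a, b} \<in> E)"

definition walk_length :: "(nat \<Rightarrow> complex) \<Rightarrow> nat list \<Rightarrow> real" where
  "walk_length x ws = (\<Sum>(a, b) \<leftarrow> zip ws (tl ws). dist (x a) (x b))"

text \<open>Shortest-path distance in G_S (infinite if no path exists).\<close>
definition graph_dist :: "nat \<Rightarrow> nat set set \<Rightarrow> (nat \<Rightarrow> complex) \<Rightarrow> nat \<Rightarrow> nat \<Rightarrow> ereal" where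
  "graph_dist n E x i j = (INF ws \<in> {ws. walk n E ws i j}. ereal (walk_length x ws))"

definition is_t_spanner :: "nat \<Rightarrow> nat set set \<Rightarrow> (nat \<Rightarrow> complex) \<Rightarrow> real \<Rightarrow> bool" where
  "is_t_spanner n E x t \<longleftrightarrow>
     (\<forall>i<n. \<forall>j<n. x i \<noteq> x j \<longrightarrow> graph_dist n E x i j \<le> ereal (t * dist (x i) (x j)))"

definition imprecise_t_spanner :: "nat \<Rightarrow> (nat \<Rightarrow> complex set) \<Rightarrow> nat set set \<Rightarrow> real \<Rightarrow> bool" where
  "imprecise_t_spanner n R E t \<longleftrightarrow> imprecise_graph n E \<and>
     (\<forall>x. precise_instance n R x \<longrightarrow> is_t_spanner n E x t)"

end

theory Submission
  imports Defs
begin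

lemma wl_cons2: "walk_length x (a # b # rest) = dist (x a) (x b) + walk_length x (b # rest)"
  by (simp add: walk_length_def)

lemma wl_ge: "ws \<noteq> [] \<Longrightarrow> dist (x (hd ws)) (x (last ws)) \<le> walk_length x ws"
proof (induction ws)
  case Nil then show ?case by simp
next
  case (Cons a ws)
  show ?case
  proof (cases ws)
    case Nil then show ?thesis by (simp add: walk_length_def)
  next
    case (Cons b rest)
    have "dist (x b) (x (last ws)) \<le> walk_length x ws" using Cons.IH Cons by simp
    moreover have "dist (x a) (x (last ws)) \<le> dist (x a) (x b) + dist (x b) (x (last ws))"
      by (rule dist_triangle)
    ultimately show ?thesis using Cons by (simp add: wl_cons2)
  qed
qed

lemma cis_inj:
  assumes "i < n" "j < n" "i \<noteq> j"
  shows "cis (real i * (2 * pi / real n)) \<noteq> cis (real j * (2 * pi / real n))"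
proof
  assume h: "cis (real i * (2 * pi / real n)) = cis (real j * (2 * pi / real n))"
  have n0: "real n > 0" using assms by simp
  have "cos (real i * (2 * pi / real n) - real j * (2 * pi / real n)) = 1"
  proof -
    have "cis (real i * (2 * pi / real n) - real j * (2 * pi / real n)) = 1"
      using h by (simp add: cis_divide[symmetric])
    then have "Re (cis (real i * (2 * pi / real n) - real j * (2 * pi / real n))) = 1" by simp
    then show ?thesis by simp
  qed
  then obtain k :: int where k: "real i * (2 * pi / real n) - real j * (2 * pi / real n) = real_of_int k * 2 * pi"
    using cos_one_2pi_int by blast
  have "(real i - real j) * (2 * pi) = real n * (real_of_int k * 2 * pi)"
    using k n0 by (simp add: field_simps)
  then have "(real i - real j) * (2 * pi) = (real n * k) * (2 * pi)" by (simp add: algebra_simps)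
  then have e: "real i - real j = real n * k" by simp
  have "real_of_int (int i - int j) = real_of_int (int n * k)" using e by simp
  then have e2: "int i - int j = int n * k" by linarith
  have "k \<noteq> 0" using e2 assms by auto
  then have "\<bar>int n * k\<bar> \<ge> int n" using mult_left_mono[of 1 "\<bar>k\<bar>" "int n"] by (simp add: abs_mult)
  then show False using e2 assms by linarith
qed

theorem lemma1:
  fixes n :: nat and t :: real and E :: "nat set set"
  assumes "n \<ge> 2" and "t > 1"
    and "imprecise_t_spanner n (O_seg t n) E t"
  shows "(\<forall>i<n. \<forall>j<n. i \<noteq> j \<longrightarrow> {i, j} \<in> E) \<and> card E = n choose 2"
proof -
  have IG: "imprecise_graph n E" and SP: "\<And>x. precise_instance n (O_seg t n) x \<Longrightarrow> is_t_spanner n E x t"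
    using assms(3) unfolding imprecise_t_spanner_def by auto
  define c where "c = (\<lambda>k::nat. cis (real k * (2 * pi / real n)))"
  define p where "p = (\<lambda>k. complex_of_real 0.4 * c k)"
  define q where "q = (\<lambda>k. complex_of_real ((t + 1) / 2) * c k)"
  have np: "\<And>k. norm (p k) = 0.4" unfolding p_def c_def by (simp add: norm_mult)
  have nq: "\<And>k. norm (q k) = (t + 1) / 2" unfolding q_def c_def using assms(2) by (simp add: norm_mult)
  have all: "{i, j} \<in> E" if ij: "i < n" "j < n" "i \<noteq> j" for i j
  proof (rule ccontr)
    assume nE: "{i, j} \<notin> E"
    define x where "x = (\<lambda>k. if k = i \<or> k = j then p k else q k)"
    have pi: "precise_instance n (O_seg t n) x"
      unfolding precise_instance_def x_def O_seg_def p_def q_def c_def by auto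
    have xne: "x i \<noteq> x j"
      using cis_inj[OF ij] ij(3) unfolding x_def p_def c_def by auto
    have dij: "dist (x i) (x j) \<le> 0.8"
    proof -
      have "dist (x i) (x j) \<le> norm (x i) + norm (x j)" by (simp add: dist_norm norm_triangle_ineq4)
      then show ?thesis using ij(3) unfolding x_def by (simp add: np)
    qed
    have far: "dist (x i) (x k) \<ge> (t + 1) / 2 - 0.4 \<and> dist (x k) (x j) \<ge> (t + 1) / 2 - 0.4"
      if "k \<noteq> i" "k \<noteq> j" for k
    proof -
      have "norm (x k) - norm (x i) \<le> dist (x i) (x k)"
        by (metis dist_commute dist_norm norm_triangle_ineq2)
      moreover have "norm (x k) - norm (x j) \<le> dist (x k) (x j)"
        by (metis dist_norm norm_triangle_ineq2)
      ultimately show ?thesis using that unfolding x_def by (simp add: np nq)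
    qed
    have lb: "ereal (t + 0.2) \<le> ereal (walk_length x ws)" if w: "walk n E ws i j" for ws
    proof -
      from w have ne: "ws \<noteq> []" and h: "hd ws = i" and l: "last ws = j"
        and lt: "\<forall>k\<in>set ws. k < n"
        and ed: "\<forall>(a, b)\<in>set (zip ws (tl ws)). {a, b} \<in> E" unfolding walk_def by auto
      obtain b rest where ws: "ws = i # b # rest"
      proof (cases ws)
        case Nil then show ?thesis using ne by simp
      next
        case (Cons a r)
        show ?thesis
        proof (cases r)
          case Nil then show ?thesis using Cons h l ij(3) by simp
        next
          case (Cons b rest) then show ?thesis using \<open>ws = a # r\<close> h that by simp
        qed
      qed
      have bE: "{i, b} \<in> E" using ed ws by simp
      then have "i \<noteq> b" using IG unfolding imprecise_graph_def by (auto simp: doubleton_eq_iff)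
      moreover have "b \<noteq> j" using bE nE by auto
      ultimately have fb: "dist (x i) (x b) \<ge> (t + 1) / 2 - 0.4 \<and> dist (x b) (x j) \<ge> (t + 1) / 2 - 0.4"
        using far by auto
      have "dist (x b) (x j) \<le> walk_length x (b # rest)"
        using wl_ge[of "b # rest" x] l ws by simp
      then have "walk_length x ws \<ge> dist (x i) (x b) + dist (x b) (x j)"
        using ws by (simp add: wl_cons2)
      then have "t + 0.2 \<le> walk_length x ws" using fb[THEN conjunct1] fb[THEN conjunct2] by (simp add: field_simps)
      then show ?thesis by simp
    qed
    have "ereal (t + 0.2) \<le> graph_dist n E x i j"
      unfolding graph_dist_def by (rule INF_greatest) (use lb in auto)
    moreover have "graph_dist n E x i j \<le> ereal (t * dist (x i) (x j))"
      using SP[OF pi] ij xne unfolding is_t_spanner_def by auto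
    ultimately have "t + 0.2 \<le> t * dist (x i) (x j)" by (meson order_trans ereal_less_eq(3))
    moreover have "t * dist (x i) (x j) \<le> t * 0.8" using dij assms(2) by simp
    ultimately show False using assms(2) by simp
  qed
  have Eeq: "E = {B. B \<subseteq> {0..<n} \<and> card B = 2}"
  proof
    show "E \<subseteq> {B. B \<subseteq> {0..<n} \<and> card B = 2}"
      using IG unfolding imprecise_graph_def by auto
    show "{B. B \<subseteq> {0..<n} \<and> card B = 2} \<subseteq> E"
    proof
      fix B assume "B \<in> {B. B \<subseteq> {0..<n} \<and> card B = 2}"
      then obtain a b where "B = {a, b}" "a \<noteq> b" "a < n" "b < n"
        by (auto simp: card_2_iff)
      then show "B \<in> E" using all by auto
    qed
  qed
  have "card E = n choose 2" unfolding Eeq using n_subsets[of "{0..<n}" 2] by simp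
  then show ?thesis using all by blast
qed

end
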